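(* Let $d,m\ge1$, $\nu>0$, $\boldsymbol{\xi},\mathbf{y}\in\mathbb{R}^d$, $\boldsymbol{\Omega}$ a $d\times d$ positive definite matrix and $\bar{\boldsymbol{\Gamma}}$ an $m\times m$ positive definite correlation matrix. Let $\mathbf{y}_*=(\mathbf{0}^\top,\mathbf{y}^\top)^\top$, $\boldsymbol{\xi}_*=(\mathbf{0}^\top,\boldsymbol{\xi}^\top)^\top\in\mathbb{R}^{m+d}$ and $\boldsymbol{\Omega}_*=\mathrm{diag}(\bar{\boldsymbol{\Gamma}},\boldsymbol{\Omega})$. Then $$T_{d+m}(\mathbf{y}_*-\boldsymbol{\xi}_*;\boldsymbol{\Omega}_*,\nu)=T_d(\mathbf{y}-\boldsymbol{\xi};\boldsymbol{\Omega},\nu)\,T_m(\mathbf{0};\bar{\boldsymbol{\Gamma}},\nu).$$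
   Context: $T_k(\mathbf{x};\boldsymbol{\Sigma},\nu)$ denotes the cumulative distribution function, evaluated at $\mathbf{x}\in\mathbb{R}^k$, of the $k$-dimensional Student $t$ distribution with location $\mathbf{0}$, positive definite dispersion matrix $\boldsymbol{\Sigma}$ and $\nu$ degrees of freedom (i.e. of $V^{-1/2}\mathbf{X}$ with $\mathbf{X}\sim\mathcal{N}_k(\mathbf{0},\boldsymbol{\Sigma})$ independent of $V\sim\mathrm{Gamma}(\nu/2,\nu/2)$). *)

theory Defs
  imports "HOL-Probability.Probability"
begin

definition pos_def_mat :: "real^'n^'n \<Rightarrow> bool" where
  "pos_def_mat S \<longleftrightarrow> transpose S = S \<and> (\<forall>x. x \<noteq> 0 \<longrightarrow> x \<bullet> (S *v x) > 0)"

definition pos_def_corr_mat :: "real^'n^'n \<Rightarrow> bool" where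
  "pos_def_corr_mat S \<longleftrightarrow> pos_def_mat S \<and> (\<forall>i. S $ i $ i = 1)"

definition mvn_density :: "real^'n^'n \<Rightarrow> real^'n \<Rightarrow> real" where
  "mvn_density S x =
     exp (- (x \<bullet> (matrix_inv S *v x)) / 2) / sqrt ((2 * pi) ^ CARD('n) * det S)"

definition mvn :: "real^'n^'n \<Rightarrow> (real^'n) measure" where
  "mvn S = density lborel (\<lambda>x. ennreal (mvn_density S x))"

definition gamma_density :: "real \<Rightarrow> real \<Rightarrow> real \<Rightarrow> real" where
  "gamma_density a b v =
     (if v > 0 then b powr a * v powr (a - 1) * exp (- b * v) / Gamma a else 0)"

definition gamma_distr :: "real \<Rightarrow> real \<Rightarrow> real measure" where
  "gamma_distr a b = density lborel (\<lambda>v. ennreal (gamma_density a b v))"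

text \<open>CDF of the multivariate Student t distribution with location 0, dispersion S and
  nu degrees of freedom: the law of V^(-1/2) X with X ~ N(0,S) independent of
  V ~ Gamma(nu/2, nu/2).\<close>
definition mvt_cdf :: "real^'n \<Rightarrow> real^'n^'n \<Rightarrow> real \<Rightarrow> real" where
  "mvt_cdf x S nu =
     measure (mvn S \<Otimes>\<^sub>M gamma_distr (nu/2) (nu/2))
       {(X, V). \<forall>i. X $ i / sqrt V \<le> x $ i}"

definition block_diag :: "real^'m^'m \<Rightarrow> real^'d^'d \<Rightarrow> real^('m + 'd)^('m + 'd)" where
  "block_diag A B = (\<chi> i j. case (i, j) of
       (Inl a, Inl b) \<Rightarrow> A $ a $ b
     | (Inr a, Inr b) \<Rightarrow> B $ a $ b
     | _ \<Rightarrow> 0)"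

definition vstack :: "real^'m \<Rightarrow> real^'d \<Rightarrow> real^('m + 'd)" where
  "vstack u w = (\<chi> i. case i of Inl a \<Rightarrow> u $ a | Inr b \<Rightarrow> w $ b)"

end

theory Submission
  imports Defs
begin


lemma sum_UNIV_sum: "(\<Sum>i\<in>(UNIV::('a::finite + 'b::finite) set). f i) = (\<Sum>a\<in>UNIV. f (Inl a)) + (\<Sum>b\<in>UNIV. f (Inr b))"
  by (subst UNIV_Plus_UNIV[symmetric], subst sum.Plus) (simp_all add: o_def)

lemma prod_UNIV_sum: "(\<Prod>i\<in>(UNIV::('a::finite + 'b::finite) set). f i) = (\<Prod>a\<in>UNIV. f (Inl a)) * (\<Prod>b\<in>UNIV. f (Inr b))"
  by (subst UNIV_Plus_UNIV[symmetric], subst prod.Plus) (simp_all add: o_def)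

lemma bd_nth[simp]:
  "block_diag A B $ Inl a $ Inl a' = A $ a $ a'"
  "block_diag A B $ Inr b $ Inr b' = B $ b $ b'"
  "block_diag A B $ Inl a $ Inr b = 0"
  "block_diag A B $ Inr b $ Inl a = 0"
  by (simp_all add: block_diag_def)

lemma vstack_nth[simp]: "vstack u w $ Inl a = u $ a" "vstack u w $ Inr b = w $ b"
  by (simp_all add: vstack_def)

lemma bd_mult: "block_diag A B ** block_diag C D = block_diag (A ** C) (B ** D)"
  unfolding vec_eq_iff
  by (simp add: split_sum_all matrix_matrix_mult_def sum_UNIV_sum)

lemma bd_one: "block_diag (mat 1) (mat 1) = mat 1"
  unfolding vec_eq_iff
  by (simp add: split_sum_all mat_def)

lemma bd_mult_vec: "block_diag A B *v vstack u w = vstack (A *v u) (B *v w)"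
  unfolding vec_eq_iff
  by (simp add: split_sum_all matrix_vector_mult_def sum_UNIV_sum)

lemma vstack_inner: "vstack u w \<bullet> vstack u' w' = u \<bullet> u' + w \<bullet> w'"
  by (simp add: inner_vec_def sum_UNIV_sum)

lemma invertible_inv:
  fixes A :: "real^'n^'n"
  assumes "invertible A" shows "A ** matrix_inv A = mat 1 \<and> matrix_inv A ** A = mat 1"
  using assms unfolding invertible_def matrix_inv_def by (rule someI_ex)

lemma matrix_inv_bd:
  fixes A :: "real^'m^'m" and B :: "real^'d^'d"
  assumes "invertible A" "invertible B"
  shows "matrix_inv (block_diag A B) = block_diag (matrix_inv A) (matrix_inv B)"
proof -
  let ?X = "block_diag (matrix_inv A) (matrix_inv B)"
  have 1: "block_diag A B ** ?X = mat 1" "?X ** block_diag A B = mat 1"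
    using invertible_inv[OF assms(1)] invertible_inv[OF assms(2)] by (simp_all add: bd_mult bd_one)
  show ?thesis unfolding matrix_inv_def[of "block_diag A B"]
  proof (rule some_equality)
    show "block_diag A B ** ?X = mat 1 \<and> ?X ** block_diag A B = mat 1" using 1 by simp
  next
    fix Y assume "block_diag A B ** Y = mat 1 \<and> Y ** block_diag A B = mat 1"
    then have "Y = Y ** (block_diag A B ** ?X)" "Y ** block_diag A B = mat 1" using 1 by auto
    then show "Y = ?X" by (metis matrix_mul_assoc matrix_mul_lid)
  qed
qed

lemma pos_def_invertible:
  fixes A :: "real^'n^'n"
  assumes "pos_def_mat A" shows "invertible A"
proof -
  have "\<forall>x. A *v x = 0 \<longrightarrow> x = 0"
    using assms unfolding pos_def_mat_def by (metis inner_zero_right less_irrefl)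
  then obtain B where "B ** A = mat 1" using matrix_left_invertible_ker by blast
  then show ?thesis using invertible_left_inverse by blast
qed



lemma permutes_UNIV_bij: "p permutes (UNIV::'a set) \<longleftrightarrow> bij p"
  using permutes_bij bij_imp_permutes by blast

lemma perm_fin: "p permutes (UNIV::'a::finite set) \<Longrightarrow> permutation p"
  unfolding permutation_permutes by (rule exI[of _ UNIV]) simp

lemma bij_map_sum': assumes "bij q" "bij r" shows "bij (map_sum q r)"
proof -
  have "q \<circ> inv q = id" "r \<circ> inv r = id" "inv q \<circ> q = id" "inv r \<circ> r = id"
    using assms by (simp_all add: bij_def surj_iff inj_iff)
  then show ?thesis
  by (intro o_bij[of "map_sum (inv q) (inv r)"]) (simp_all add: map_sum.comp map_sum.id)
qed

lemma sign_map_sum_l: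
  assumes "q permutes (UNIV::'a::finite set)"
  shows "sign (map_sum q (id::'b::finite \<Rightarrow> 'b)) = sign q"
  using assms finite_class.finite_UNIV
proof (induction rule: permutes_induct)
  case id
  then show ?case by (simp only: map_sum.id sign_id)
next
  case (swap a b p)
  have e: "map_sum (Transposition.transpose a b \<circ> p) (id::'b\<Rightarrow>'b) =
     Transposition.transpose (Inl a) (Inl b) \<circ> map_sum p id"
    by (rule ext, case_tac x) (auto simp: Transposition.transpose_def)
  have pm: "permutation (map_sum p (id::'b\<Rightarrow>'b))"
    using swap by (intro perm_fin) (simp add: permutes_UNIV_bij bij_map_sum')
  have s1: "sign (Transposition.transpose (Inl a) (Inl b) \<circ> map_sum p (id::'b\<Rightarrow>'b)) = sign (Transposition.transpose (Inl a) (Inl b) :: 'a+'b \<Rightarrow> _) * sign (map_sum p (id::'b\<Rightarrow>'b))"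
    by (rule sign_compose) (simp_all add: permutation_swap_id pm)
  have s2: "sign (Transposition.transpose a b \<circ> p) = sign (Transposition.transpose a b) * sign p"
    by (rule sign_compose) (simp_all add: permutation_swap_id perm_fin swap)
  show ?case unfolding e s1 s2 using swap.IH swap.hyps by (simp add: sign_swap_id id_def)
qed

lemma sign_map_sum_r:
  assumes "r permutes (UNIV::'b::finite set)"
  shows "sign (map_sum (id::'a::finite \<Rightarrow> 'a) r) = sign r"
  using assms finite_class.finite_UNIV
proof (induction rule: permutes_induct)
  case id
  then show ?case by (simp only: map_sum.id sign_id)
next
  case (swap a b p)
  have e: "map_sum (id::'a\<Rightarrow>'a) (Transposition.transpose a b \<circ> p) =
     Transposition.transpose (Inr a) (Inr b) \<circ> map_sum id p"
    by (rule ext, case_tac x) (auto simp: Transposition.transpose_def)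
  have pm: "permutation (map_sum (id::'a\<Rightarrow>'a) p)"
    using swap by (intro perm_fin) (simp add: permutes_UNIV_bij bij_map_sum')
  have s1: "sign (Transposition.transpose (Inr a) (Inr b) \<circ> map_sum (id::'a\<Rightarrow>'a) p) = sign (Transposition.transpose (Inr a) (Inr b) :: 'a+'b \<Rightarrow> _) * sign (map_sum (id::'a\<Rightarrow>'a) p)"
    by (rule sign_compose) (simp_all add: permutation_swap_id pm)
  have s2: "sign (Transposition.transpose a b \<circ> p) = sign (Transposition.transpose a b) * sign p"
    by (rule sign_compose) (simp_all add: permutation_swap_id perm_fin swap)
  show ?case unfolding e s1 s2 using swap.IH swap.hyps by (simp add: sign_swap_id id_def)
qed

lemma sign_map_sum:
  assumes "q permutes (UNIV::'a::finite set)" "r permutes (UNIV::'b::finite set)"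
  shows "sign (map_sum q r) = sign q * sign r"
proof -
  have "map_sum q r = map_sum q id \<circ> map_sum id r" by (simp add: map_sum.comp)
  moreover have "permutation (map_sum q (id::'b\<Rightarrow>'b))" "permutation (map_sum (id::'a\<Rightarrow>'a) r)"
    using assms by (auto intro!: perm_fin simp: permutes_UNIV_bij bij_map_sum')
  ultimately show ?thesis using assms
    by (simp add: sign_compose sign_map_sum_l sign_map_sum_r)
qed

lemma det_bd:
  fixes A :: "real^'m^'m" and B :: "real^'d^'d"
  shows "det (block_diag A B) = det A * det B"
proof -
  let ?P = "{p. p permutes (UNIV::('m+'d) set)}"
  let ?PA = "{p. p permutes (UNIV::'m set)}"
  let ?PB = "{p. p permutes (UNIV::'d set)}"
  let ?F = "\<lambda>p. of_int (sign p) * (\<Prod>i\<in>UNIV. block_diag A B $ i $ p i) :: real"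
  let ?G = "\<lambda>(q, r). map_sum q r :: 'm+'d \<Rightarrow> 'm+'d"
  have sub: "?G ` (?PA \<times> ?PB) \<subseteq> ?P"
    by (auto simp: permutes_UNIV_bij bij_map_sum')
  have zero: "?F p = 0" if p: "p \<in> ?P - ?G ` (?PA \<times> ?PB)" for p
  proof (rule ccontr)
    assume "?F p \<noteq> 0"
    then have nz: "block_diag A B $ i $ p i \<noteq> 0" for i by auto
    have "\<exists>a'. p (Inl a) = Inl a'" for a
      using nz[of "Inl a"] by (cases "p (Inl a)") auto
    then obtain q where q: "\<And>a. p (Inl a) = Inl (q a)" by metis
    have "\<exists>b'. p (Inr b) = Inr b'" for b
      using nz[of "Inr b"] by (cases "p (Inr b)") auto
    then obtain r where r: "\<And>b. p (Inr b) = Inr (r b)" by metis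
    have pe: "p = map_sum q r" by (rule ext, case_tac x) (simp_all add: q r)
    have bp: "bij p" using p by (simp add: permutes_UNIV_bij)
    have "inj q" using bp unfolding bij_def inj_def by (metis q sum.inject(1))
    then have "bij q" by (simp add: bij_def finite_UNIV_inj_surj)
    have "inj r" using bp unfolding bij_def inj_def by (metis r sum.inject(2))
    then have "bij r" by (simp add: bij_def finite_UNIV_inj_surj)
    then have "p \<in> ?G ` (?PA \<times> ?PB)" using \<open>bij q\<close> pe
      by (auto simp: permutes_UNIV_bij image_iff)
    then show False using p by blast
  qed
  have "det (block_diag A B) = sum ?F ?P" by (simp add: det_def)
  also have "\<dots> = sum ?F (?G ` (?PA \<times> ?PB))"
    apply (rule sum.mono_neutral_right[OF _ sub])
    apply (simp add: finite_permutations)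
    using zero by blast
  also have "\<dots> = sum (?F \<circ> ?G) (?PA \<times> ?PB)"
  proof (rule sum.reindex)
    show "inj_on ?G (?PA \<times> ?PB)"
    proof (rule inj_onI, clarify)
      fix q r q' r' assume "map_sum q r = map_sum q' r'"
      then have "\<forall>x. map_sum q r x = map_sum q' r' x" by simp
      then show "q = q' \<and> r = r'" by (auto simp: split_sum_all fun_eq_iff)
    qed
  qed
  also have "\<dots> = (\<Sum>(q,r)\<in>?PA \<times> ?PB. (of_int (sign q) * (\<Prod>a\<in>UNIV. A $ a $ q a)) *
                    (of_int (sign r) * (\<Prod>b\<in>UNIV. B $ b $ r b)))"
    by (rule sum.cong, auto simp: sign_map_sum prod_UNIV_sum)
  also have "\<dots> = det A * det B"
    by (simp add: det_def sum_product sum.cartesian_product)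
  finally show ?thesis .
qed



lemma inj_invertible:
  fixes A :: "real^'n^'n"
  assumes "\<And>x. x \<noteq> 0 \<Longrightarrow> A *v x \<noteq> 0" shows "invertible A"
proof -
  obtain B where "B ** A = mat 1" using matrix_left_invertible_ker assms by blast
  then show ?thesis using invertible_left_inverse by blast
qed

lemma pos_def_det_pos:
  fixes A :: "real^'n^'n"
  assumes "pos_def_mat A" shows "det A > 0"
proof (rule ccontr)
  assume neg: "\<not> det A > 0"
  define M where "M t = t *\<^sub>R A + (1 - t) *\<^sub>R mat 1" for t :: real
  have Mv: "M t *v x = t *\<^sub>R (A *v x) + (1 - t) *\<^sub>R x" for t x
    by (simp add: M_def matrix_vector_mult_add_rdistrib scaleR_matrix_vector_assoc[symmetric])
  have inv: "invertible (M t)" if "0 \<le> t" "t \<le> 1" for t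
  proof (rule inj_invertible)
    fix x :: "real^'n" assume "x \<noteq> 0"
    then have "x \<bullet> (A *v x) > 0" "x \<bullet> x > 0" using assms by (auto simp: pos_def_mat_def)
    then have "t * (x \<bullet> (A *v x)) + (1 - t) * (x \<bullet> x) > 0"
      using that by (cases "t = 0") (auto intro: add_pos_nonneg add_nonneg_pos)
    then have "x \<bullet> (M t *v x) > 0" by (simp add: Mv inner_add_right)
    then show "M t *v x \<noteq> 0" by auto
  qed
  have ent: "M t $ i $ j = t * A $ i $ j + (1 - t) * (if i = j then 1 else 0)" for t i j
    by (simp add: M_def mat_def)
  have cont: "continuous_on {0..1} (\<lambda>t. - det (M t))"
    unfolding det_def ent by (intro continuous_intros)
  have "M 0 = mat 1" "M 1 = A" by (simp_all add: M_def)
  then have "- det (M 0) \<le> 0" "0 \<le> - det (M 1)" using neg by auto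
  from IVT'[of "\<lambda>t. - det (M t)", OF this _ cont] obtain t where
    "0 \<le> t" "t \<le> 1" "det (M t) = 0" by auto
  then show False using inv invertible_det_nz by blast
qed

lemma card_sum_type: "CARD('a::finite + 'b::finite) = CARD('a) + CARD('b)"
  by (simp add: UNIV_Plus_UNIV[symmetric] card_Plus del: UNIV_Plus_UNIV)

lemma mvn_density_bd:
  fixes A :: "real^'m^'m" and B :: "real^'d^'d"
  assumes "pos_def_mat A" "pos_def_mat B"
  shows "mvn_density (block_diag A B) (vstack u w) = mvn_density A u * mvn_density B w"
  unfolding mvn_density_def
  using pos_def_invertible[OF assms(1)] pos_def_invertible[OF assms(2)]
  by (simp add: matrix_inv_bd bd_mult_vec vstack_inner det_bd card_sum_type power_add
      real_sqrt_mult exp_add[symmetric] add_divide_distrib diff_divide_distrib)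

lemma mvn_density_nonneg: "pos_def_mat A \<Longrightarrow> mvn_density A x \<ge> 0"
  unfolding mvn_density_def using pos_def_det_pos[of A] by simp



lemma vstack_cont: "continuous_on UNIV (case_prod vstack :: (real^'m) \<times> (real^'d) \<Rightarrow> real^('m+'d))"
proof -
  have "case_prod vstack = (\<lambda>x::(real^'m) \<times> (real^'d). \<chi> i. case i of Inl a \<Rightarrow> fst x $ a | Inr b \<Rightarrow> snd x $ b)"
    by (auto simp: vstack_def fun_eq_iff)
  moreover have "continuous_on UNIV (\<lambda>x::(real^'m) \<times> (real^'d). \<chi> i. case i of Inl a \<Rightarrow> fst x $ a | Inr b \<Rightarrow> snd x $ b)"
  proof (intro continuous_on_vec_lambda)
    fix i :: "'m + 'd" show "continuous_on UNIV (\<lambda>x::(real^'m) \<times> (real^'d). case i of Inl a \<Rightarrow> fst x $ a | Inr b \<Rightarrow> snd x $ b)"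
      by (cases i) (auto intro!: continuous_intros)
  qed
  ultimately show ?thesis by simp
qed

lemma vstack_meas[measurable]: "(case_prod vstack :: (real^'m) \<times> (real^'d) \<Rightarrow> real^('m+'d)) \<in> borel_measurable borel"
  by (rule borel_measurable_continuous_onI[OF vstack_cont])

lemma emeasure_lborel_box_cart:
  fixes l u :: "real^'n"
  assumes "\<And>i. l $ i \<le> u $ i"
  shows "emeasure lborel (box l u) = ennreal (\<Prod>i\<in>UNIV. u $ i - l $ i)"
proof -
  have "\<And>b. b \<in> Basis \<Longrightarrow> l \<bullet> b \<le> u \<bullet> b"
    using assms by (auto simp: Basis_vec_def cart_eq_inner_axis[symmetric])
  moreover have "(\<Prod>b\<in>Basis. (u - l) \<bullet> b) = (\<Prod>i\<in>UNIV. u $ i - l $ i)"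
    by (simp add: Basis_vec_def cart_eq_inner_axis axis_eq_axis prod.UNION_disjoint inner_diff_left)
  ultimately show ?thesis by (simp add: emeasure_lborel_box)
qed

lemma lborel_vstack:
  "distr (lborel :: ((real^'m) \<times> (real^'d)) measure) borel (case_prod vstack) = (lborel :: (real^('m+'d)) measure)"
proof (rule lborel_eqI[symmetric])
  fix l u :: "real^('m+'d)"
  assume le: "\<And>b. b \<in> Basis \<Longrightarrow> l \<bullet> b \<le> u \<bullet> b"
  have le': "l $ i \<le> u $ i" for i
  proof -
    have "axis i (1::real) \<in> Basis" unfolding Basis_vec_def by (intro UN_I[of i] UN_I[of 1]) auto
    from le[OF this] show ?thesis by (simp add: cart_eq_inner_axis)
  qed
  let ?lL = "\<chi> a. l $ Inl a" and ?uL = "\<chi> a. u $ Inl a"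
  let ?lR = "\<chi> b. l $ Inr b" and ?uR = "\<chi> b. u $ Inr b"
  have pre: "case_prod vstack -` box l u = box ?lL ?uL \<times> box ?lR ?uR"
    by (auto simp: mem_box_cart split_sum_all)
  have "emeasure (distr (lborel :: ((real^'m) \<times> (real^'d)) measure) borel (case_prod vstack)) (box l u)
      = emeasure (lborel :: ((real^'m) \<times> (real^'d)) measure) (box ?lL ?uL \<times> box ?lR ?uR)"
    by (subst emeasure_distr) (simp_all add: pre)
  also have "\<dots> = emeasure (lborel \<Otimes>\<^sub>M lborel) (box ?lL ?uL \<times> box ?lR ?uR)"
    by (simp add: lborel_prod)
  also have "\<dots> = emeasure lborel (box ?lL ?uL) * emeasure lborel (box ?lR ?uR)"
    by (simp add: lborel.emeasure_pair_measure_Times)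
  also have "\<dots> = ennreal (\<Prod>i\<in>UNIV. u $ i - l $ i)"
    using le' by (simp add: emeasure_lborel_box_cart prod_UNIV_sum ennreal_mult prod_nonneg)
  also have "\<dots> = ennreal (\<Prod>b\<in>Basis. (u - l) \<bullet> b)"
    by (simp add: Basis_vec_def cart_eq_inner_axis axis_eq_axis prod.UNION_disjoint inner_diff_left)
  finally show "emeasure (distr (lborel :: ((real^'m) \<times> (real^'d)) measure) borel (case_prod vstack)) (box l u)
      = ennreal (\<Prod>b\<in>Basis. (u - l) \<bullet> b)" .
qed simp

lemma mvn_density_meas[measurable]: "mvn_density S \<in> borel_measurable borel"
proof -
  have e: "mvn_density S = (\<lambda>x. exp (- (x \<bullet> (matrix_inv S *v x)) * (1/2)) * (1 / sqrt ((2 * pi) ^ CARD('a) * det S)))"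
    by (simp add: mvn_density_def fun_eq_iff)
  have "continuous_on UNIV (mvn_density S)"
    unfolding e inner_vec_def matrix_vector_mult_def
    by (intro continuous_intros)
  then show ?thesis by (rule borel_measurable_continuous_onI)
qed

lemma sf_density: "f \<in> borel_measurable borel \<Longrightarrow> sigma_finite_measure (density lborel (\<lambda>x. ennreal (f x)))"
  by (subst sigma_finite_measure.sigma_finite_iff_density_finite[OF sigma_finite_lborel]) auto

lemma mvn_bd:
  fixes A :: "real^'m^'m" and B :: "real^'d^'d"
  assumes "pos_def_mat A" "pos_def_mat B"
  shows "mvn (block_diag A B) = distr (mvn A \<Otimes>\<^sub>M mvn B) borel (case_prod vstack)"
proof -
  have "mvn (block_diag A B) = density (distr (lborel \<Otimes>\<^sub>M lborel) borel (case_prod vstack))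
          (\<lambda>x. ennreal (mvn_density (block_diag A B) x))"
    unfolding mvn_def by (simp add: lborel_prod lborel_vstack)
  also have "\<dots> = distr (density (lborel \<Otimes>\<^sub>M lborel) (\<lambda>x. ennreal (mvn_density (block_diag A B) (case_prod vstack x)))) borel (case_prod vstack)"
    by (rule density_distr) (simp_all add: lborel_prod)
  also have "(\<lambda>x. ennreal (mvn_density (block_diag A B) (case_prod vstack x))) =
      (\<lambda>(u, w). ennreal (mvn_density A u) * ennreal (mvn_density B w))"
    using assms by (auto simp: fun_eq_iff mvn_density_bd ennreal_mult mvn_density_nonneg)
  also have "density (lborel \<Otimes>\<^sub>M lborel) (\<lambda>(u, w). ennreal (mvn_density A u) * ennreal (mvn_density B w))
      = mvn A \<Otimes>\<^sub>M mvn B"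
    unfolding mvn_def
    by (rule pair_measure_density[symmetric]) (simp_all add: sf_density lborel.sigma_finite_measure_axioms)
  finally show ?thesis .
qed



lemma gamma_density_meas[measurable]: "gamma_density a b \<in> borel_measurable borel"
  unfolding gamma_density_def by measurable

lemma sf_gamma: "sigma_finite_measure (gamma_distr a b)"
  unfolding gamma_distr_def by (rule sf_density) simp

lemma gamma_AE_pos: "AE v in gamma_distr a b. v > 0"
  unfolding gamma_distr_def
  by (subst AE_density) (auto simp: gamma_density_def)

lemma gamma_total:
  assumes a: "a > 0" and b: "b > 0"
  shows "emeasure (gamma_distr a b) UNIV = 1"
proof -
  let ?h = "\<lambda>t::real. indicator {0..} t * t powr (a - 1) / exp t :: real"
  have G: "ennreal (Gamma a) = (\<integral>\<^sup>+t. ennreal (?h t) \<partial>lborel)"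
    using Gamma_conv_nn_integral_real[OF a] by simp
  also have "\<dots> = ennreal \<bar>b\<bar> * (\<integral>\<^sup>+v. ennreal (?h (0 + b * v)) \<partial>lborel)"
    by (rule nn_integral_real_affine) (use b in auto)
  finally have G': "ennreal (Gamma a) = ennreal b * (\<integral>\<^sup>+v. ennreal (?h (b * v)) \<partial>lborel)"
    using b by simp
  have Gpos: "Gamma a > 0" using a by (rule Gamma_real_pos)
  have pt: "gamma_density a b v = (1 / Gamma a) * (b * ?h (b * v))" for v
  proof (cases "v > 0")
    case True
    have "b powr a = b powr (1 + (a - 1))" by simp
    also have "\<dots> = b * b powr (a - 1)" using b by (simp only: powr_add powr_one_gt_zero_iff) simp
    finally have "b powr a = b * b powr (a - 1)" .
    moreover have "(b * v) powr (a - 1) = b powr (a - 1) * v powr (a - 1)"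
      using b True by (simp add: powr_mult)
    ultimately show ?thesis using True b
      by (simp add: gamma_density_def exp_minus field_simps)
  next
    case False
    then show ?thesis using b
      by (cases "v = 0") (auto simp: gamma_density_def indicator_def zero_le_mult_iff)
  qed
  have "emeasure (gamma_distr a b) UNIV = (\<integral>\<^sup>+v. ennreal (gamma_density a b v) \<partial>lborel)"
    unfolding gamma_distr_def by (subst emeasure_density) simp_all
  also have "\<dots> = (\<integral>\<^sup>+v. ennreal (1 / Gamma a) * (ennreal b * ennreal (?h (b * v))) \<partial>lborel)"
  proof (intro nn_integral_cong)
    fix v :: real
    have nn: "?h (b * v) \<ge> 0" by (simp add: indicator_def)
    have "ennreal ((1 / Gamma a) * (b * ?h (b * v))) = ennreal (1 / Gamma a) * ennreal (b * ?h (b * v))"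
      by (rule ennreal_mult) (use Gpos b nn in simp_all)
    also have "ennreal (b * ?h (b * v)) = ennreal b * ennreal (?h (b * v))"
      by (rule ennreal_mult) (use b nn in simp_all)
    finally show "ennreal (gamma_density a b v) = ennreal (1 / Gamma a) * (ennreal b * ennreal (?h (b * v)))"
      by (simp only: pt)
  qed
  also have "\<dots> = ennreal (1 / Gamma a) * (ennreal b * (\<integral>\<^sup>+v. ennreal (?h (b * v)) \<partial>lborel))"
    by (simp add: nn_integral_cmult)
  also have "\<dots> = ennreal (1 / Gamma a) * ennreal (Gamma a)" using G' by simp
  also have "\<dots> = 1" using Gpos by (simp add: ennreal_mult[symmetric])
  finally show ?thesis .
qed



lemma cdf_set_meas: "{x::(real^'n) \<times> real. \<forall>i. fst x $ i / sqrt (snd x) \<le> z $ i} \<in> sets borel"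
proof -
  have [measurable]: "(\<lambda>x::(real^'n) \<times> real. fst x $ i) \<in> borel_measurable borel" for i
    by (intro borel_measurable_continuous_onI continuous_intros)
  have [measurable]: "(\<lambda>x::(real^'n) \<times> real. sqrt (snd x)) \<in> borel_measurable borel"
    by (intro borel_measurable_continuous_onI continuous_intros)
  show ?thesis by measurable
qed

lemma cdf_set_meas2: "{X::real^'n. \<forall>i. X $ i / sqrt V \<le> z $ i} \<in> sets borel"
  by measurable

lemma cdf_iter:
  fixes M :: "(real^'n) measure" and N :: "real measure"
  assumes sfM: "sigma_finite_measure M" and sfN: "sigma_finite_measure N"
    and sM: "sets M = sets borel" and sN: "sets N = sets borel"
  shows "emeasure (M \<Otimes>\<^sub>M N) {(X, V). \<forall>i. X $ i / sqrt V \<le> z $ i} =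
           (\<integral>\<^sup>+V. emeasure M {X. \<forall>i. X $ i / sqrt V \<le> z $ i} \<partial>N)"
    and "(\<lambda>V. emeasure M {X. \<forall>i. X $ i / sqrt V \<le> z $ i}) \<in> borel_measurable N"
proof -
  interpret pair_sigma_finite M N using sfM sfN by (simp add: pair_sigma_finite_def)
  have se: "sets (M \<Otimes>\<^sub>M N) = sets (borel \<Otimes>\<^sub>M borel)"
    by (rule sets_pair_measure_cong[OF sM sN])
  have e: "{(X, V). \<forall>i. X $ i / sqrt V \<le> z $ i} = {x::(real^'n) \<times> real. \<forall>i. fst x $ i / sqrt (snd x) \<le> z $ i}"
    by auto
  have S: "{(X, V). \<forall>i. X $ i / sqrt V \<le> z $ i} \<in> sets (M \<Otimes>\<^sub>M N)"
    unfolding e se borel_prod by (rule cdf_set_meas)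
  have pre: "(\<lambda>x. (x, V)) -` {(X, V). \<forall>i. X $ i / sqrt V \<le> z $ i} = {X. \<forall>i. X $ i / sqrt V \<le> z $ i}" for V
    by auto
  show "emeasure (M \<Otimes>\<^sub>M N) {(X, V). \<forall>i. X $ i / sqrt V \<le> z $ i} =
           (\<integral>\<^sup>+V. emeasure M {X. \<forall>i. X $ i / sqrt V \<le> z $ i} \<partial>N)"
    using emeasure_pair_measure_alt2[OF S] by (simp only: pre)
  show "(\<lambda>V. emeasure M {X. \<forall>i. X $ i / sqrt V \<le> z $ i}) \<in> borel_measurable N"
    using measurable_emeasure_Pair2[OF S] by (simp only: pre)
qed



theorem lemma2:
  fixes xi y :: "real^'d" and Omega :: "real^'d^'d"
    and Gamma_bar :: "real^'m^'m" and nu :: real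
  assumes "nu > 0"
    and "pos_def_mat Omega"
    and "pos_def_corr_mat Gamma_bar"
  shows "mvt_cdf (vstack 0 y - vstack 0 xi) (block_diag Gamma_bar Omega) nu
           = mvt_cdf (y - xi) Omega nu * mvt_cdf (0 :: real^'m) Gamma_bar nu"
proof -
  define G where "G = gamma_distr (nu/2) (nu/2)"
  define MA where "MA = mvn Gamma_bar"
  define MB where "MB = mvn Omega"
  define z where "z = vstack (0::real^'m) y - vstack 0 xi"
  have posA: "pos_def_mat Gamma_bar" using assms(3) by (simp add: pos_def_corr_mat_def)
  have sfA: "sigma_finite_measure MA" unfolding MA_def mvn_def by (rule sf_density) simp
  have sfB: "sigma_finite_measure MB" unfolding MB_def mvn_def by (rule sf_density) simp
  have sfD: "sigma_finite_measure (mvn (block_diag Gamma_bar Omega))" unfolding mvn_def by (rule sf_density) simp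
  have sfG: "sigma_finite_measure G" unfolding G_def by (rule sf_gamma)
  have sA: "sets MA = sets borel" "space MA = UNIV" unfolding MA_def mvn_def by simp_all
  have sB: "sets MB = sets borel" "space MB = UNIV" unfolding MB_def mvn_def by simp_all
  have sD: "sets (mvn (block_diag Gamma_bar Omega)) = sets borel" unfolding mvn_def by simp
  have sG: "sets G = sets borel" "space G = UNIV" unfolding G_def gamma_distr_def by simp_all
  have Gtot: "emeasure G (space G) = 1" unfolding G_def
    using gamma_total[of "nu/2" "nu/2"] assms(1) by (simp add: gamma_distr_def)
  have AEpos: "AE V in G. V > 0" unfolding G_def by (rule gamma_AE_pos)
  define P where "P = {u::real^'m. \<forall>a. u $ a \<le> 0}"
  have Pm: "P \<in> sets MA" unfolding P_def sA by measurable
  have Qm: "{w::real^'d. \<forall>b. w $ b / sqrt V \<le> (y - xi) $ b} \<in> sets MB" for V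
    unfolding sB by (rule cdf_set_meas2)
  interpret AB: sigma_finite_measure MB by (rule sfB)
  have inner: "emeasure (mvn (block_diag Gamma_bar Omega)) {X. \<forall>i. X $ i / sqrt V \<le> z $ i}
      = emeasure MA P * emeasure MB {w. \<forall>b. w $ b / sqrt V \<le> (y - xi) $ b}" if V: "V > 0" for V
  proof -
    have pre: "case_prod vstack -` {X. \<forall>i. X $ i / sqrt V \<le> z $ i} \<inter> space (MA \<Otimes>\<^sub>M MB)
        = P \<times> {w. \<forall>b. w $ b / sqrt V \<le> (y - xi) $ b}"
      using V by (auto simp: P_def z_def space_pair_measure sA sB split_sum_all divide_le_0_iff)
    have "emeasure (mvn (block_diag Gamma_bar Omega)) {X. \<forall>i. X $ i / sqrt V \<le> z $ i}
        = emeasure (distr (MA \<Otimes>\<^sub>M MB) borel (case_prod vstack)) {X. \<forall>i. X $ i / sqrt V \<le> z $ i}"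
      unfolding MA_def MB_def by (simp add: mvn_bd posA assms(2))
    also have "\<dots> = emeasure (MA \<Otimes>\<^sub>M MB) (P \<times> {w. \<forall>b. w $ b / sqrt V \<le> (y - xi) $ b})"
    proof (subst emeasure_distr)
      have "sets (MA \<Otimes>\<^sub>M MB) = sets (borel \<Otimes>\<^sub>M borel)" by (rule sets_pair_measure_cong[OF sA(1) sB(1)])
      then show "case_prod vstack \<in> MA \<Otimes>\<^sub>M MB \<rightarrow>\<^sub>M borel"
        unfolding borel_prod using vstack_meas by (subst measurable_cong_sets[OF _ refl])
    qed (simp_all only: pre cdf_set_meas2)
    also have "\<dots> = emeasure MA P * emeasure MB {w. \<forall>b. w $ b / sqrt V \<le> (y - xi) $ b}"
      by (rule AB.emeasure_pair_measure_Times[OF Pm Qm])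
    finally show ?thesis .
  qed
  have PV: "{X::real^'m. \<forall>i. X $ i / sqrt V \<le> (0::real^'m) $ i} = P" if "V > 0" for V
    using that by (auto simp: P_def divide_le_0_iff)
  have L: "emeasure (mvn (block_diag Gamma_bar Omega) \<Otimes>\<^sub>M G) {(X, V). \<forall>i. X $ i / sqrt V \<le> z $ i}
      = emeasure MA P * emeasure (MB \<Otimes>\<^sub>M G) {(X, V). \<forall>i. X $ i / sqrt V \<le> (y - xi) $ i}"
  proof -
    have "emeasure (mvn (block_diag Gamma_bar Omega) \<Otimes>\<^sub>M G) {(X, V). \<forall>i. X $ i / sqrt V \<le> z $ i}
        = (\<integral>\<^sup>+V. emeasure (mvn (block_diag Gamma_bar Omega)) {X. \<forall>i. X $ i / sqrt V \<le> z $ i} \<partial>G)"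
      by (rule cdf_iter(1)[OF sfD sfG sD sG(1)])
    also have "\<dots> = (\<integral>\<^sup>+V. emeasure MA P * emeasure MB {w. \<forall>b. w $ b / sqrt V \<le> (y - xi) $ b} \<partial>G)"
      by (rule nn_integral_cong_AE) (use AEpos inner in auto)
    also have "\<dots> = emeasure MA P * (\<integral>\<^sup>+V. emeasure MB {w. \<forall>b. w $ b / sqrt V \<le> (y - xi) $ b} \<partial>G)"
      by (rule nn_integral_cmult[OF cdf_iter(2)[OF sfB sfG sB(1) sG(1)]])
    also have "\<dots> = emeasure MA P * emeasure (MB \<Otimes>\<^sub>M G) {(X, V). \<forall>i. X $ i / sqrt V \<le> (y - xi) $ i}"
      by (simp only: cdf_iter(1)[OF sfB sfG sB(1) sG(1)])
    finally show ?thesis .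
  qed
  have R: "emeasure (MA \<Otimes>\<^sub>M G) {(X, V). \<forall>i. X $ i / sqrt V \<le> (0::real^'m) $ i} = emeasure MA P"
  proof -
    have "emeasure (MA \<Otimes>\<^sub>M G) {(X, V). \<forall>i. X $ i / sqrt V \<le> (0::real^'m) $ i}
        = (\<integral>\<^sup>+V. emeasure MA {X. \<forall>i. X $ i / sqrt V \<le> (0::real^'m) $ i} \<partial>G)"
      by (rule cdf_iter(1)[OF sfA sfG sA(1) sG(1)])
    also have "\<dots> = (\<integral>\<^sup>+V. emeasure MA P \<partial>G)"
      by (rule nn_integral_cong_AE) (use AEpos PV in auto)
    also have "\<dots> = emeasure MA P" using Gtot by simp
    finally show ?thesis .
  qed
  show ?thesis
    unfolding mvt_cdf_def measure_def z_def[symmetric] G_def[symmetric] MA_def[symmetric] MB_def[symmetric]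
    by (simp only: L R enn2real_mult mult.commute)
qed

end
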